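(* Let $m\ge 38$ be even and let $G$ be a graph with maximum spectral radius among all $H(4,3)$-free graphs with $m$ edges and no isolated vertices. Let $\mathbf{x}$ be the Perron vector of $G$, $u^*$ a vertex maximizing $x_{u^*}$, $N = N(u^* )$, $A_+ = \{v\in N : d_N(v)\ge 1\}$ and $W = V(G)\setminus N[u^*]$. If $G[A_+]\cong K_{1,t}$ for some $t\ge 1$, then $W=\emptyset$.
   Context: All graphs are simple and undirected; $\rho(G)$ is the largest adjacency eigenvalue and the Perron vector is the positive unit eigenvector for $\rho(G)$ (the extremal $G$ is connected). $H(4,3)$ is the graph formed by a cycle of length $4$ and a triangle sharing exactly one common vertex. $N(v)$ denotes the neighbourhood of $v$, $N[v]=N(v)\cup\{v\}$, $d_S(v)=|N(v)\cap S|$, and $G[S]$ is the subgraph induced by $S$. *)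

theory Defs
  imports Complex_Main
begin

definition graph :: "'a set \<Rightarrow> ('a \<Rightarrow> 'a \<Rightarrow> bool) \<Rightarrow> bool" where
  "graph V E \<longleftrightarrow> finite V \<and> (\<forall>u v. E u v \<longrightarrow> u \<in> V \<and> v \<in> V)
     \<and> (\<forall>u v. E u v \<longrightarrow> E v u) \<and> (\<forall>u. \<not> E u u)"

definition edges :: "'a set \<Rightarrow> ('a \<Rightarrow> 'a \<Rightarrow> bool) \<Rightarrow> 'a set set" where
  "edges V E = {{u, v} | u v. u \<in> V \<and> v \<in> V \<and> E u v}"

definition no_isolated :: "'a set \<Rightarrow> ('a \<Rightarrow> 'a \<Rightarrow> bool) \<Rightarrow> bool" where
  "no_isolated V E \<longleftrightarrow> (\<forall>v\<in>V. \<exists>w\<in>V. E v w)"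

definition H43_free :: "'a set \<Rightarrow> ('a \<Rightarrow> 'a \<Rightarrow> bool) \<Rightarrow> bool" where
  "H43_free V E \<longleftrightarrow> \<not> (\<exists>a b c d e f.
     distinct [a, b, c, d, e, f] \<and> {a, b, c, d, e, f} \<subseteq> V \<and>
     E a b \<and> E b c \<and> E c d \<and> E d a \<and> E a e \<and> E e f \<and> E f a)"

definition adj_eigenvalue :: "'a set \<Rightarrow> ('a \<Rightarrow> 'a \<Rightarrow> bool) \<Rightarrow> real \<Rightarrow> bool" where
  "adj_eigenvalue V E lam \<longleftrightarrow> (\<exists>x :: 'a \<Rightarrow> real. (\<exists>v\<in>V. x v \<noteq> 0) \<and>
     (\<forall>v\<in>V. (\<Sum>w\<in>{w\<in>V. E v w}. x w) = lam * x v))"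

text \<open>Spectral radius: largest adjacency eigenvalue (the adjacency matrix is
  real symmetric, so all eigenvalues are real).\<close>
definition spectral_radius :: "'a set \<Rightarrow> ('a \<Rightarrow> 'a \<Rightarrow> bool) \<Rightarrow> real" where
  "spectral_radius V E = Max {lam. adj_eigenvalue V E lam}"

definition perron_vector :: "'a set \<Rightarrow> ('a \<Rightarrow> 'a \<Rightarrow> bool) \<Rightarrow> ('a \<Rightarrow> real) \<Rightarrow> bool" where
  "perron_vector V E x \<longleftrightarrow> (\<forall>v\<in>V. x v > 0) \<and> (\<Sum>v\<in>V. (x v)\<^sup>2) = 1 \<and>
     (\<forall>v\<in>V. (\<Sum>w\<in>{w\<in>V. E v w}. x w) = spectral_radius V E * x v)"

definition nbhd :: "'a set \<Rightarrow> ('a \<Rightarrow> 'a \<Rightarrow> bool) \<Rightarrow> 'a \<Rightarrow> 'a set" where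
  "nbhd V E v = {w\<in>V. E v w}"

definition induced_star :: "('a \<Rightarrow> 'a \<Rightarrow> bool) \<Rightarrow> 'a set \<Rightarrow> nat \<Rightarrow> bool" where
  "induced_star E S t \<longleftrightarrow> (\<exists>f. bij_betw f {0..t} S \<and>
     (\<forall>i\<in>{0..t}. \<forall>j\<in>{0..t}. E (f i) (f j) \<longleftrightarrow> ((i = 0 \<and> j \<noteq> 0) \<or> (j = 0 \<and> i \<noteq> 0))))"

definition admissible :: "nat \<Rightarrow> 'a set \<Rightarrow> ('a \<Rightarrow> 'a \<Rightarrow> bool) \<Rightarrow> bool" where
  "admissible m V E \<longleftrightarrow> graph V E \<and> H43_free V E \<and> card (edges V E) = m \<and> no_isolated V E"

text \<open>G is extremal: admissible and of maximum spectral radius among all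
  admissible graphs (competitors on finite subsets of nat, which covers every
  finite graph up to isomorphism).\<close>
definition extremal :: "nat \<Rightarrow> 'a set \<Rightarrow> ('a \<Rightarrow> 'a \<Rightarrow> bool) \<Rightarrow> bool" where
  "extremal m V E \<longleftrightarrow> admissible m V E \<and>
     (\<forall>(V' :: nat set) E'. admissible m V' E' \<longrightarrow> spectral_radius V' E' \<le> spectral_radius V E)"

end

theory Submission
  imports Defs "Jordan_Normal_Form.Char_Poly"
begin

lemma eig_finite: "finite {lam. adj_eigenvalue {0..<n::nat} E lam}"
proof -
  define A :: "real mat" where "A = mat n n (\<lambda>(i,j). if E i j then 1 else 0)"
  have Ac: "A \<in> carrier_mat n n" by (simp add: A_def)
  have "{lam. adj_eigenvalue {0..<n} E lam} \<subseteq> {lam. poly (char_poly A) lam = 0}"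
  proof
    fix lam assume "lam \<in> {lam. adj_eigenvalue {0..<n} E lam}"
    then obtain x where x: "\<exists>v\<in>{0..<n}. x v \<noteq> 0" "\<forall>v\<in>{0..<n}. (\<Sum>w\<in>{w\<in>{0..<n}. E v w}. x w) = lam * x v"
      by (auto simp: adj_eigenvalue_def)
    define vv where "vv = vec n x"
    have "A *\<^sub>v vv = lam \<cdot>\<^sub>v vv"
    proof (rule eq_vecI)
      fix i assume i: "i < dim_vec (lam \<cdot>\<^sub>v vv)"
      hence i': "i < n" by (simp add: vv_def)
      have "(A *\<^sub>v vv) $ i = (\<Sum>j\<in>{0..<n}. (if E i j then 1 else 0) * x j)"
        using i' by (simp add: A_def vv_def mult_mat_vec_def scalar_prod_def row_def)
      also have "\<dots> = (\<Sum>j\<in>{0..<n}. if E i j then x j else 0)"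
        by (rule sum.cong) auto
      also have "\<dots> = (\<Sum>w\<in>{w\<in>{0..<n}. E i w}. x w)"
        by (rule sum.inter_filter[symmetric]) simp
      also have "\<dots> = lam * x i" using x(2) i' by auto
      finally show "(A *\<^sub>v vv) $ i = (lam \<cdot>\<^sub>v vv) $ i" using i' by (simp add: vv_def)
    qed (simp add: A_def vv_def)
    moreover have "vv \<noteq> 0\<^sub>v n"
    proof
      assume "vv = 0\<^sub>v n"
      then have "\<forall>v<n. x v = 0" by (metis index_vec index_zero_vec(1) vv_def)
      with x(1) show False by auto
    qed
    ultimately have "eigenvalue A lam" unfolding eigenvalue_def eigenvector_def
      using Ac by (intro exI[of _ vv]) (auto simp: vv_def)
    then show "lam \<in> {lam. poly (char_poly A) lam = 0}"
      using eigenvalue_root_char_poly[OF Ac] by auto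
  qed
  moreover have "char_poly A \<noteq> 0" using degree_monic_char_poly[OF Ac] by auto
  ultimately show ?thesis using poly_roots_finite finite_subset by blast
qed


definition cE :: "nat \<Rightarrow> nat \<Rightarrow> nat \<Rightarrow> bool" where
  "cE k i j \<longleftrightarrow> i < k+3 \<and> j < k+3 \<and> i \<noteq> j \<and>
     (i = 0 \<or> j = 0 \<or> (i = 1 \<and> 2 \<le> j \<and> j \<le> k+1) \<or> (j = 1 \<and> 2 \<le> i \<and> i \<le> k+1))"

lemma c_graph: "graph {0..<k+3} (cE k)"
  unfolding graph_def cE_def by auto

lemma c_noiso: "no_isolated {0..<k+3} (cE k)"
  unfolding no_isolated_def
proof
  fix v assume v: "v \<in> {0..<k+3}"
  show "\<exists>w\<in>{0..<k + 3}. cE k v w"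
  proof (cases "v = 0")
    case True
    then show ?thesis by (intro bexI[of _ 1]) (auto simp: cE_def)
  next
    case False
    then show ?thesis using v by (intro bexI[of _ 0]) (auto simp: cE_def)
  qed
qed

lemma cE_cover: "cE k i j \<Longrightarrow> i \<le> 1 \<or> j \<le> 1"
  unfolding cE_def by auto

lemma three01: "x\<le>1 \<Longrightarrow> y\<le>1 \<Longrightarrow> z\<le>1 \<Longrightarrow> x\<noteq>y \<Longrightarrow> y\<noteq>z \<Longrightarrow> x\<noteq>(z::nat) \<Longrightarrow> False"
  by (cases x; cases y; cases z) auto

lemma cover6: assumes "distinct [a,b,c,d,e,f::nat]" "(a\<le>1 \<or> b\<le>1)" "(b\<le>1\<or>c\<le>1)" "(c\<le>1\<or>d\<le>1)"
  "(d\<le>1\<or>a\<le>1)" "(a\<le>1\<or>e\<le>1)" "(e\<le>1\<or>f\<le>1)" "(f\<le>1\<or>a\<le>1)" shows False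
proof (cases "a \<le> 1")
  case False
  then have "b \<le> 1" "d \<le> 1" "e \<le> 1" using assms(2,5,6) by auto
  then show False using assms(1) by (metis three01[of b d e] distinct.simps(2) list.set_intros insert_iff list.simps(15))
next
  case True
  show False
  proof (cases "c \<le> 1")
    case c: True
    show False
    proof (cases "e \<le> 1")
      case True then show False using c \<open>a \<le> 1\<close> assms(1) by (metis three01[of a c e] distinct.simps(2) list.set_intros insert_iff list.simps(15))
    next
      case False then have "f \<le> 1" using assms(7) by auto
      then show False using c \<open>a \<le> 1\<close> assms(1) by (metis three01[of a c f] distinct.simps(2) list.set_intros insert_iff list.simps(15))
    qed
  next
    case False
    then have "b \<le> 1" "d \<le> 1" using assms(3,4) by auto
    then show False using \<open>a \<le> 1\<close> assms(1) by (metis three01[of a b d] distinct.simps(2) list.set_intros insert_iff list.simps(15))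
  qed
qed

lemma c_free: "H43_free {0..<k+3} (cE k)"
  unfolding H43_free_def
  apply (intro notI)
  apply (elim exE conjE)
  apply (rule cover6, assumption)
  apply (erule cE_cover)+
  done

lemma in_edges: "E a b \<Longrightarrow> a \<in> V \<Longrightarrow> b \<in> V \<Longrightarrow> {a,b} \<in> edges V E"
  unfolding edges_def by blast

lemma c_edges: "edges {0..<k+3} (cE k) = (\<lambda>j. {0,j}) ` {1..k+2} \<union> (\<lambda>j. {1,j}) ` {2..k+1}"
proof
  show "edges {0..<k+3} (cE k) \<subseteq> (\<lambda>j. {0,j}) ` {1..k+2} \<union> (\<lambda>j. {1,j}) ` {2..k+1}"
  proof
    fix e assume "e \<in> edges {0..<k+3} (cE k)"
    then obtain i j where e: "e = {i,j}" "cE k i j" unfolding edges_def by auto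
    consider "i = 0" | "j = 0" | "i = 1 \<and> 2 \<le> j \<and> j \<le> k+1" | "j = 1 \<and> 2 \<le> i \<and> i \<le> k+1"
      using e(2) unfolding cE_def by blast
    then show "e \<in> (\<lambda>j. {0,j}) ` {1..k+2} \<union> (\<lambda>j. {1,j}) ` {2..k+1}"
    proof cases
      case 1 then show ?thesis using e unfolding cE_def by auto
    next
      case 2 then have "e = {0,i}" "1 \<le> i" "i \<le> k+2" using e unfolding cE_def by auto
      then show ?thesis by auto
    next
      case 3 then show ?thesis using e by auto
    next
      case 4 then have "e = {1,i}" using e by auto
      then show ?thesis using 4 by auto
    qed
  qed
next
  show "(\<lambda>j. {0,j}) ` {1..k+2} \<union> (\<lambda>j. {1,j}) ` {2..k+1} \<subseteq> edges {0..<k+3} (cE k)"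
  proof
    fix e assume "e \<in> (\<lambda>j. {0::nat,j}) ` {1..k+2} \<union> (\<lambda>j. {1,j}) ` {2..k+1}"
    then consider j where "e = {0,j}" "j \<in> {1..k+2}" | j where "e = {1,j}" "j \<in> {2..k+1}" by blast
    then show "e \<in> edges {0..<k+3} (cE k)"
    proof cases
      case 1
      then have "cE k 0 j" unfolding cE_def by auto
      then show ?thesis using 1 in_edges[of "cE k" 0 j] by (auto simp: cE_def)
    next
      case 2
      then have "cE k 1 j" unfolding cE_def by auto
      then show ?thesis using 2 in_edges[of "cE k" 1 j] by (auto simp: cE_def)
    qed
  qed
qed


lemma c_card: "card (edges {0..<k+3} (cE k)) = 2*k+2"
proof -
  have i1: "inj_on (\<lambda>j. {0::nat,j}) {1..k+2}" unfolding inj_on_def by (metis insert_absorb2 insert_iff doubleton_eq_iff)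
  have i2: "inj_on (\<lambda>j. {1::nat,j}) {2..k+1}" unfolding inj_on_def by (metis doubleton_eq_iff)
  have a1: "\<And>e. e \<in> (\<lambda>j. {1::nat,j}) ` {2..k+1} \<Longrightarrow> 0 \<notin> e" by auto
  have a2: "\<And>e. e \<in> (\<lambda>j. {0::nat,j}) ` {1..k+2} \<Longrightarrow> 0 \<in> e" by auto
  have d: "(\<lambda>j. {0::nat,j}) ` {1..k+2} \<inter> (\<lambda>j. {1,j}) ` {2..k+1} = {}"
    using a1 a2 by blast
  have "card ((\<lambda>j. {0::nat,j}) ` {1..k+2} \<union> (\<lambda>j. {1,j}) ` {2..k+1}) = card ((\<lambda>j. {0::nat,j}) ` {1..k+2}) + card ((\<lambda>j. {1::nat,j}) ` {2..k+1})"
    by (rule card_Un_disjoint) (use d in auto)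
  also have "\<dots> = (k+2) + k" using i1 i2 by (simp add: card_image)
  finally show ?thesis unfolding c_edges by simp
qed



lemma root_ex:
  fixes k :: real assumes k: "k \<ge> 2"
  shows "\<exists>l. (l^2-k-1)*(l^2-k) - (l+k)^2 = 0 \<and> l^2 - l \<ge> 2*k + 1/4 \<and> l > 0"
proof -
  define s where "s = sqrt (8*k+2)"
  have k0: "8*k+2 \<ge> 0" using k by linarith
  have s2: "s^2 = 8*k+2" unfolding s_def using real_sqrt_pow2[OF k0] .
  have s0: "s \<ge> 0" unfolding s_def using k0 by simp
  have kk: "k*2 \<le> k*k" using mult_left_mono[of 2 k k] k by linarith
  define l0 where "l0 = (1+s)/2"
  have h: "l0^2 = l0 + 2*k + 1/4" unfolding l0_def using s2 by (simp add: power2_eq_square field_simps)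
  have l0pos: "l0 \<ge> 1/2" unfolding l0_def using s0 by simp
  define p where "p = (\<lambda>l::real. (l^2-k-1)*(l^2-k) - (l+k)^2)"
  have "p l0 = (l0+k-3/4)*(l0+k+1/4) - (l0+k)^2" unfolding p_def h by (simp add: algebra_simps)
  also have "\<dots> = -(l0+k)/2 - 3/16" by (simp add: power2_eq_square field_simps)
  finally have pl0: "p l0 \<le> 0" using l0pos k by simp
  have "s \<le> 2*k+1"
  proof (rule power2_le_imp_le)
    have "(2*k+1)^2 = 4*(k*k) + 4*k + 1" by (simp add: power2_eq_square algebra_simps)
    then show "s^2 \<le> (2*k+1)^2" using s2 kk k by linarith
    show "0 \<le> 2*k+1" using k by simp
  qed
  then have l0k: "l0 \<le> k+1" unfolding l0_def by simp
  have pk1: "p (k+1) = (k*k+k)*(k*k+k+1) - (2*k+1)*(2*k+1)" unfolding p_def by (simp add: power2_eq_square algebra_simps)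
  have a1: "k*k + k \<ge> 3*k" using kk by simp
  have a2: "(k*k+k)*(k*k+k+1) \<ge> (3*k)*(3*k)"
    by (rule mult_mono) (use a1 k kk in linarith)+
  have "(3*k)*(3*k) = 9*(k*k)" "(2*k+1)*(2*k+1) = 4*(k*k) + 4*k + 1" by (simp_all add: algebra_simps)
  then have a3: "(3*k)*(3*k) \<ge> (2*k+1)*(2*k+1)" using kk k by linarith
  have pk: "0 \<le> p (k+1)" using pk1 a2 a3 by simp
  have "continuous_on {l0..k+1} p" unfolding p_def by (intro continuous_intros)
  from IVT'[of p l0 0 "k+1", OF pl0 pk l0k this] obtain l where l: "l0 \<le> l" "l \<le> k+1" "p l = 0" by blast
  have "0 \<le> (l - l0) * (l + l0 - 1)" using l(1) l0pos by (intro mult_nonneg_nonneg) auto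
  then have "l^2 - l \<ge> 2*k+1/4" using h by (simp add: power2_eq_square algebra_simps)
  then show ?thesis using l l0pos p_def by (intro exI[of _ l]) auto
qed

lemma nb0: "{w\<in>{0..<k+3}. cE k 0 w} = {1..k+2}" unfolding cE_def by auto
lemma nb1: "{w\<in>{0..<k+3}. cE k 1 w} = insert 0 {2..k+1}" unfolding cE_def by auto
lemma nbi: "2 \<le> i \<Longrightarrow> i \<le> k+1 \<Longrightarrow> {w\<in>{0..<k+3}. cE k i w} = {0,1}" unfolding cE_def by auto
lemma nbp: "{w\<in>{0..<k+3}. cE k (k+2) w} = {0}" unfolding cE_def by auto

lemma c_eig: assumes k: "k \<ge> 2"
  shows "\<exists>l. adj_eigenvalue {0..<k+3} (cE k) l \<and> l^2 - l \<ge> 2*real k + 1/4 \<and> l > 0"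
proof -
  define K where "K = real k"
  have K: "K \<ge> 2" using k unfolding K_def by simp
  obtain l where l: "(l^2-K-1)*(l^2-K) - (l+K)^2 = 0" "l^2 - l \<ge> 2*K + 1/4" "l > 0"
    using root_ex[OF K] by blast
  have lK: "l^2 - K > 0" using l K by linarith
  define b where "b = (l+K)/(l^2-K)"
  define q where "q = (1+b)/l"
  define z where "z = 1/l"
  have eb: "b * (l^2 - K) = l + K" unfolding b_def using lK by simp
  have "(b*(l+K)) * (l^2-K) = (l^2 - K - 1) * (l^2-K)"
  proof -
    have "(b*(l+K)) * (l^2-K) = (b*(l^2-K))*(l+K)" by (simp add: mult_ac)
    also have "\<dots> = (l+K)*(l+K)" using eb by simp
    also have "\<dots> = (l^2 - K - 1) * (l^2-K)" using l(1) by (simp add: power2_eq_square algebra_simps)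
    finally show ?thesis .
  qed
  then have eb2: "b*(l+K) = l^2 - K - 1" using lK by simp
  have lq: "l * q = 1 + b" unfolding q_def using l(3) by simp
  have lz: "l * z = 1" unfolding z_def using l(3) by simp
  have e0: "b + K*q + z = l"
  proof -
    have "l * (b + K*q + z) = l*b + K*(l*q) + l*z" by (simp add: algebra_simps)
    also have "\<dots> = b*(l+K) + K + 1" using lq lz by (simp add: algebra_simps)
    also have "\<dots> = l * l" using eb2 by (simp add: power2_eq_square)
    finally show ?thesis using l(3) by simp
  qed
  have e1: "1 + K*q = l*b"
  proof -
    have "l * (1 + K*q) = l + K*(1+b)" using lq by (simp add: algebra_simps)
    also have "\<dots> = l*(l*b)"
    proof -
      have "l*(l*b) = b*(l*l)" by (simp add: mult_ac)
      moreover have "b*(l^2-K) = b*(l*l) - K*b" by (simp add: power2_eq_square algebra_simps)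
      moreover have "K*(1+b) = K + K*b" by (simp add: algebra_simps)
      ultimately show ?thesis using eb by linarith
    qed
    finally show ?thesis using l(3) by simp
  qed
  define xv where "xv = (\<lambda>j::nat. if j = 0 then 1 else if j = 1 then b else if j = k+2 then z else q)"
  have sq: "(\<Sum>w\<in>{2..k+1}. xv w) = K * q"
  proof -
    have "(\<Sum>w\<in>{2..k+1}. xv w) = (\<Sum>w\<in>{2..k+1}. q)" by (rule sum.cong) (auto simp: xv_def)
    also have "\<dots> = K * q" by (simp add: K_def)
    finally show ?thesis .
  qed
  have "adj_eigenvalue {0..<k+3} (cE k) l"
    unfolding adj_eigenvalue_def
  proof (intro exI[of _ xv] conjI)
    show "\<exists>v\<in>{0..<k+3}. xv v \<noteq> 0" by (intro bexI[of _ 0]) (auto simp: xv_def)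
    show "\<forall>v\<in>{0..<k+3}. (\<Sum>w\<in>{w\<in>{0..<k+3}. cE k v w}. xv w) = l * xv v"
    proof
      fix v assume v: "v \<in> {0..<k+3}"
      consider "v = 0" | "v = 1" | "2 \<le> v \<and> v \<le> k+1" | "v = k+2" using v by fastforce
      then show "(\<Sum>w\<in>{w\<in>{0..<k+3}. cE k v w}. xv w) = l * xv v"
      proof cases
        case 1
        have "{1..k+2} = insert 1 (insert (k+2) {2..k+1})" by auto
        then have "(\<Sum>w\<in>{1..k+2}. xv w) = xv 1 + (xv (k+2) + (\<Sum>w\<in>{2..k+1}. xv w))" by simp
        also have "\<dots> = b + K*q + z" using sq by (simp add: xv_def)
        finally show ?thesis using 1 e0 nb0 by (simp add: xv_def)
      next
        case 2
        have "(\<Sum>w\<in>insert 0 {2..k+1}. xv w) = xv 0 + (\<Sum>w\<in>{2..k+1}. xv w)" by simp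
        also have "\<dots> = 1 + K*q" using sq by (simp add: xv_def)
        finally show ?thesis using 2 e1 nb1 by (simp add: xv_def)
      next
        case 3
        then have "xv v = q" by (auto simp: xv_def)
        then show ?thesis using 3 nbi[of v k] lq by (simp add: xv_def)
      next
        case 4
        then show ?thesis using nbp[of k] lz by (simp add: xv_def)
      qed
    qed
  qed
  then show ?thesis using l K_def by auto
qed



lemma swap_count: assumes "finite A" "finite B"
  shows "(\<Sum>v\<in>A. \<Sum>z\<in>{z\<in>B. R v z}. g z) = (\<Sum>z\<in>B. real (card {v\<in>A. R v z}) * (g z :: real))"
proof -
  have "(\<Sum>v\<in>A. \<Sum>z\<in>{z\<in>B. R v z}. g z) = (\<Sum>v\<in>A. \<Sum>z\<in>B. if R v z then g z else 0)"
    using assms(2) by (simp add: sum.inter_filter)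
  also have "\<dots> = (\<Sum>z\<in>B. \<Sum>v\<in>A. if R v z then g z else 0)" by (rule sum.swap)
  also have "\<dots> = (\<Sum>z\<in>B. real (card {v\<in>A. R v z}) * g z)"
  proof (rule sum.cong[OF refl])
    fix z assume "z \<in> B"
    have "(\<Sum>v\<in>A. if R v z then g z else 0) = (\<Sum>v\<in>{v\<in>A. R v z}. g z)"
      by (rule sum.inter_filter[symmetric, OF assms(1)])
    also have "\<dots> = real (card {v\<in>A. R v z}) * g z" by simp
    finally show "(\<Sum>v\<in>A. if R v z then g z else 0) = real (card {v\<in>A. R v z}) * g z" .
  qed
  finally show ?thesis .
qed

lemma rho_lb:
  fixes V :: "'a set"
  assumes "extremal m V E" "even m" "m \<ge> 38"
  shows "(spectral_radius V E)^2 - spectral_radius V E \<ge> real m - 7/4 \<and> spectral_radius V E \<ge> 6"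
proof -
  define k where "k = (m - 2) div 2"
  have mk: "m = 2*k+2" using assms(2,3) unfolding k_def by (auto elim!: evenE)
  have k2: "k \<ge> 2" using assms(3) mk by simp
  have k18: "real k \<ge> 18" using assms(3) mk by simp
  obtain l where l: "adj_eigenvalue {0..<k+3} (cE k) l" "l^2 - l \<ge> 2*real k + 1/4" "l > 0"
    using c_eig[OF k2] by blast
  have adm: "admissible m {0..<k+3} (cE k)"
    unfolding admissible_def using c_graph c_free c_noiso c_card mk by auto
  have "l \<le> spectral_radius {0..<k+3} (cE k)"
    unfolding spectral_radius_def using eig_finite l(1) by (intro Max_ge) auto
  also have "\<dots> \<le> spectral_radius V E" using assms(1) adm unfolding extremal_def by blast
  finally have rl: "l \<le> spectral_radius V E" .
  define r where "r = spectral_radius V E"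
  have l6: "l \<ge> 6"
  proof (rule ccontr)
    assume "\<not> 6 \<le> l"
    then have "l * l \<le> 6 * l" using l(3) by (intro mult_right_mono) auto
    then have "l^2 - l \<le> 5*l" by (simp add: power2_eq_square)
    then show False using l(2) \<open>\<not> 6 \<le> l\<close> k18 by linarith
  qed
  have "0 \<le> (r - l) * (r + l - 1)" using rl l6 unfolding r_def by (intro mult_nonneg_nonneg) auto
  then have "r^2 - r \<ge> l^2 - l" by (simp add: power2_eq_square algebra_simps)
  then show ?thesis using l(2) mk rl l6 unfolding r_def by simp
qed



theorem claim5:
  fixes m :: nat and V :: "'a set" and E :: "'a \<Rightarrow> 'a \<Rightarrow> bool"
    and x :: "'a \<Rightarrow> real" and u :: 'a and t :: nat
  assumes "even m" and "m \<ge> 38"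
    and "extremal m V E"
    and "perron_vector V E x"
    and "u \<in> V" and "\<forall>v\<in>V. x v \<le> x u"
    and "t \<ge> 1"
    and "induced_star E {v\<in>nbhd V E u. \<exists>w\<in>nbhd V E u. E v w} t"
  shows "V - insert u (nbhd V E u) = {}"
proof (rule ccontr)
  assume "V - insert u (nbhd V E u) \<noteq> {}"
  then obtain y where yW: "y \<in> V - insert u (nbhd V E u)" by blast
  define r where "r = spectral_radius V E"
  have lb: "r^2 - r \<ge> real m - 7/4" "r \<ge> 6" using rho_lb[OF assms(3,1,2)] unfolding r_def by auto
  have adm: "admissible m V E" using assms(3) unfolding extremal_def by blast
  have fin: "finite V" and inV: "\<And>a b. E a b \<Longrightarrow> a \<in> V \<and> b \<in> V"
    and sym: "\<And>a b. E a b \<Longrightarrow> E b a" and irr: "\<And>a. \<not> E a a"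
    using adm unfolding admissible_def graph_def by auto
  have free: "H43_free V E" and cardm: "card (edges V E) = m" and noiso: "no_isolated V E"
    using adm unfolding admissible_def by auto
  have xpos: "\<And>v. v \<in> V \<Longrightarrow> x v > 0"
    and eig: "\<And>v. v \<in> V \<Longrightarrow> (\<Sum>w\<in>{w\<in>V. E v w}. x w) = r * x v"
    using assms(4) unfolding perron_vector_def r_def by auto
  have xle: "\<And>v. v \<in> V \<Longrightarrow> x v \<le> x u" using assms(6) by auto
  define N where "N = {w\<in>V. E u w}"
  define W where "W = V - insert u N"
  define A where "A = {v\<in>N. \<exists>w\<in>N. E v w}"
  have Nn: "nbhd V E u = N" unfolding N_def nbhd_def by simp
  have yW': "y \<in> W" using yW Nn unfolding W_def by simp
  have finN: "finite N" "finite W" using fin unfolding N_def W_def by auto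
  have uN: "u \<notin> N" using irr unfolding N_def by auto
  have NV: "N \<subseteq> V" "W \<subseteq> V" unfolding N_def W_def by auto
  have NW: "N \<inter> W = {}" unfolding W_def by auto
  have uW: "u \<notin> W" unfolding W_def by auto
  obtain f where fb: "bij_betw f {0..t} A"
    and fE: "\<forall>i\<in>{0..t}. \<forall>j\<in>{0..t}. E (f i) (f j) \<longleftrightarrow> ((i = 0 \<and> j \<noteq> 0) \<or> (j = 0 \<and> i \<noteq> 0))"
    using assms(8) unfolding induced_star_def Nn A_def by blast
  have finj: "inj_on f {0..t}" using fb by (rule bij_betw_imp_inj_on)
  have fA: "f ` {0..t} = A" using fb by (rule bij_betw_imp_surj_on)
  define c where "c = f 0"
  define l where "l = f 1"
  have AN: "A \<subseteq> N" unfolding A_def by auto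
  have cA: "c \<in> A" unfolding c_def using fA by auto
  have lA: "l \<in> A" unfolding l_def using fA assms(7) by auto
  have cN: "c \<in> N" and lN: "l \<in> N" using cA lA AN by auto
  have Ecl: "E c l" unfolding c_def l_def using fE assms(7) by auto
  define dN where "dN = (\<lambda>z. card {v\<in>N. E v z})"
  have dNc: "dN c \<le> t"
  proof -
    have "{v\<in>N. E v c} \<subseteq> f ` {1..t}"
    proof
      fix v assume v: "v \<in> {v\<in>N. E v c}"
      then have "v \<in> A" using cN unfolding A_def by auto
      then obtain i where i: "i \<in> {0..t}" "v = f i" using fA by auto
      have "i \<noteq> 0"
      proof
        assume "i = 0" then have "v = c" using i unfolding c_def by simp
        then show False using v irr by auto
      qed
      then show "v \<in> f ` {1..t}" using i by auto
    qed
    then have "dN c \<le> card (f ` {1..t})" unfolding dN_def by (intro card_mono) auto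
    also have "\<dots> \<le> t" using card_image_le[of "{1..t}" f] by simp
    finally show ?thesis .
  qed
  have dNo: "\<And>z. z \<in> N \<Longrightarrow> z \<noteq> c \<Longrightarrow> dN z \<le> 1"
  proof -
    fix z assume z: "z \<in> N" "z \<noteq> c"
    have "{v\<in>N. E v z} \<subseteq> {c}"
    proof
      fix v assume v: "v \<in> {v\<in>N. E v z}"
      then have "v \<in> A" using z unfolding A_def by auto
      then obtain i where i: "i \<in> {0..t}" "v = f i" using fA by auto
      have "z \<in> A" using v z sym unfolding A_def by auto
      then obtain j where j: "j \<in> {0..t}" "z = f j" using fA by auto
      have "j \<noteq> 0" using j z unfolding c_def by (cases "j = 0") auto
      then have "i = 0" using fE i j v by auto
      then show "v \<in> {c}" using i unfolding c_def by auto
    qed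
    then have "dN z \<le> card {c}" unfolding dN_def by (intro card_mono) auto
    then show "dN z \<le> 1" by simp
  qed
  have P1: "r * x u = (\<Sum>v\<in>N. x v)" using eig[OF assms(5)] unfolding N_def by simp
  have P2: "\<And>v. v \<in> N \<Longrightarrow> r * x v = x u + (\<Sum>z\<in>{z\<in>N. E v z}. x z) + (\<Sum>z\<in>{z\<in>W. E v z}. x z)"
  proof -
    fix v assume v: "v \<in> N"
    have vV: "v \<in> V" using v NV by auto
    have Evu: "E v u" using v sym unfolding N_def by auto
    have split: "{w\<in>V. E v w} = insert u ({z\<in>N. E v z} \<union> {z\<in>W. E v z})"
      using Evu assms(5) NV unfolding W_def by auto
    have "(\<Sum>w\<in>{w\<in>V. E v w}. x w) = x u + ((\<Sum>z\<in>{z\<in>N. E v z}. x z) + (\<Sum>z\<in>{z\<in>W. E v z}. x z))"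
      unfolding split using finN uN uW NW
      by (subst sum.insert) (auto intro: sum.union_disjoint)
    then show "r * x v = x u + (\<Sum>z\<in>{z\<in>N. E v z}. x z) + (\<Sum>z\<in>{z\<in>W. E v z}. x z)"
      using eig[OF vV] by simp
  qed
  define S1 where "S1 = (\<Sum>v\<in>N. \<Sum>z\<in>{z\<in>N. E v z}. x z)"
  define S2 where "S2 = (\<Sum>v\<in>N. \<Sum>z\<in>{z\<in>W. E v z}. x z)"
  have P3: "r * r * x u = real (card N) * x u + S1 + S2"
  proof -
    have "r * r * x u = (\<Sum>v\<in>N. r * x v)" using P1 by (simp add: sum_distrib_left mult.assoc)
    also have "\<dots> = (\<Sum>v\<in>N. x u + (\<Sum>z\<in>{z\<in>N. E v z}. x z) + (\<Sum>z\<in>{z\<in>W. E v z}. x z))"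
      using P2 by (rule sum.cong[OF refl])
    also have "\<dots> = real (card N) * x u + S1 + S2" unfolding S1_def S2_def by (simp add: sum.distrib)
    finally show ?thesis .
  qed
  have S1e: "S1 = (\<Sum>z\<in>N. real (dN z) * x z)" unfolding S1_def dN_def by (rule swap_count[OF finN(1) finN(1)])
  have S2e: "S2 = (\<Sum>z\<in>W. real (dN z) * x z)" unfolding S2_def dN_def by (rule swap_count[OF finN(1) finN(2)])
  have S1b: "S1 \<le> (real t - 1) * x u + r * x u"
  proof -
    have "S1 - (\<Sum>z\<in>N. x z) = (\<Sum>z\<in>N. (real (dN z) - 1) * x z)"
      unfolding S1e by (simp add: sum_subtractf algebra_simps)
    also have "\<dots> \<le> (\<Sum>z\<in>N. if z = c then (real t - 1) * x u else 0)"
    proof (rule sum_mono)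
      fix z assume z: "z \<in> N"
      have xz: "x z > 0" "x z \<le> x u" using z NV xpos xle by auto
      show "(real (dN z) - 1) * x z \<le> (if z = c then (real t - 1) * x u else 0)"
      proof (cases "z = c")
        case True
        have "(real (dN z) - 1) * x z \<le> (real t - 1) * x z"
          using dNc True xz by (intro mult_right_mono) auto
        also have "\<dots> \<le> (real t - 1) * x u" using xz assms(7) by (intro mult_left_mono) auto
        finally show ?thesis using True by simp
      next
        case False
        then have "dN z \<le> 1" using dNo z by auto
        then have "(real (dN z) - 1) * x z \<le> 0" using xz by (intro mult_nonpos_nonneg) auto
        then show ?thesis using False by simp
      qed
    qed
    also have "\<dots> = (real t - 1) * x u" using cN finN by simp
    finally show ?thesis using P1 by simp
  qed
  define D where "D = (\<Sum>z\<in>W. dN z)"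
  define k where "k = dN y"
  have S2b: "S2 \<le> real D * x u - real k * (x u - x y)"
  proof -
    have Wy: "W = insert y (W - {y})" using yW' by auto
    have "S2 = real k * x y + (\<Sum>z\<in>W-{y}. real (dN z) * x z)"
      unfolding S2e k_def by (rule sum.remove[OF finN(2) yW'])
    also have "\<dots> \<le> real k * x y + (\<Sum>z\<in>W-{y}. real (dN z) * x u)"
      using xle NV xpos by (intro add_left_mono sum_mono mult_left_mono) auto
    also have "\<dots> = real k * x y + real (\<Sum>z\<in>W-{y}. dN z) * x u"
      by (simp add: sum_distrib_right)
    also have "real (\<Sum>z\<in>W-{y}. dN z) = real D - real k"
    proof -
      have "D = k + (\<Sum>z\<in>W-{y}. dN z)" unfolding D_def k_def by (rule sum.remove[OF finN(2) yW'])
      then show ?thesis by simp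
    qed
    finally show ?thesis by (simp add: algebra_simps)
  qed
  have key: "r * r * x u \<le> (real (card N) + real t - 1 + real D) * x u + r * x u - real k * (x u - x y)"
    using P3 S1b S2b by (simp add: algebra_simps)
  have finE: "finite (edges V E)"
  proof -
    have "edges V E \<subseteq> Pow V" unfolding edges_def by auto
    then show ?thesis using fin finite_subset by blast
  qed
  define E1 where "E1 = (\<lambda>v. {u,v}) ` N"
  define E2 where "E2 = (\<lambda>i. {c, f i}) ` {1..t}"
  define E3 where "E3 = (\<Union>z\<in>W. (\<lambda>v. {v,z}) ` {v\<in>N. E v z})"
  have E1s: "E1 \<subseteq> edges V E" unfolding E1_def N_def using assms(5) by (auto intro: in_edges)
  have E2s: "E2 \<subseteq> edges V E"
  proof
    fix e assume "e \<in> E2"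
    then obtain i where i: "i \<in> {1..t}" "e = {c, f i}" unfolding E2_def by auto
    have "E c (f i)" using fE i unfolding c_def by auto
    then show "e \<in> edges V E" using i inV by (auto intro: in_edges)
  qed
  have E3s: "E3 \<subseteq> edges V E" unfolding E3_def using NV by (auto intro: in_edges)
  have cE1: "card E1 = card N" unfolding E1_def
    by (rule card_image) (use uN in \<open>auto simp: inj_on_def doubleton_eq_iff\<close>)
  have cE2: "card E2 = t" unfolding E2_def
  proof (subst card_image)
    show "inj_on (\<lambda>i. {c, f i}) {1..t}"
    proof (rule inj_onI)
      fix i j assume ij: "i \<in> {1..t}" "j \<in> {1..t}" "{c, f i} = {c, f j}"
      have "f i \<noteq> c" "f j \<noteq> c" using ij(1,2) finj unfolding c_def inj_on_def by (auto, fastforce+)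
      then have "f i = f j" using ij(3) by (auto simp: doubleton_eq_iff)
      then show "i = j" using finj ij(1,2) unfolding inj_on_def by auto
    qed
  qed simp
  have cE3: "card E3 = D" unfolding E3_def D_def dN_def
  proof (subst card_UN_disjoint)
    show "finite W" by (rule finN(2))
    show "\<forall>i\<in>W. finite ((\<lambda>v. {v, i}) ` {v \<in> N. E v i})" using finN by auto
    show "\<forall>i\<in>W. \<forall>j\<in>W. i \<noteq> j \<longrightarrow> (\<lambda>v. {v, i}) ` {v \<in> N. E v i} \<inter> (\<lambda>v. {v, j}) ` {v \<in> N. E v j} = {}"
      using NW by (auto simp: doubleton_eq_iff)
    show "(\<Sum>i\<in>W. card ((\<lambda>v. {v, i}) ` {v \<in> N. E v i})) = (\<Sum>z\<in>W. card {v \<in> N. E v z})"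
    proof (rule sum.cong[OF refl], rule card_image)
      fix z assume "z \<in> W"
      show "inj_on (\<lambda>v. {v, z}) {v \<in> N. E v z}" by (auto simp: inj_on_def doubleton_eq_iff)
    qed
  qed
  have uE1: "\<And>e. e \<in> E1 \<Longrightarrow> u \<in> e" unfolding E1_def by auto
  have fN: "\<And>i. i \<le> t \<Longrightarrow> f i \<in> N" using fA AN by auto
  have uE23: "\<And>e. e \<in> E2 \<union> E3 \<Longrightarrow> u \<notin> e"
  proof -
    fix e assume "e \<in> E2 \<union> E3"
    then consider i where "i \<in> {1..t}" "e = {c, f i}" | z v where "z \<in> W" "v \<in> N" "e = {v,z}"
      unfolding E2_def E3_def by auto
    then show "u \<notin> e"
    proof cases
      case 1 then show ?thesis using fN[of i] cN uN by auto
    next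
      case 2 then show ?thesis using uN uW by auto
    qed
  qed
  have E2N: "\<And>e. e \<in> E2 \<Longrightarrow> e \<subseteq> N" unfolding E2_def using fN cN by auto
  have E3W: "\<And>e. e \<in> E3 \<Longrightarrow> e \<inter> W \<noteq> {}" unfolding E3_def by auto
  have E3N: "\<And>e. e \<in> E3 \<Longrightarrow> e \<inter> N \<noteq> {}" unfolding E3_def by auto
  have d12: "E1 \<inter> (E2 \<union> E3) = {}" using uE1 uE23 by blast
  have d23: "E2 \<inter> E3 = {}"
  proof -
    { fix e assume "e \<in> E2" "e \<in> E3"
      then have False using E2N E3W NW by blast }
    then show ?thesis by blast
  qed
  have fin123: "finite E1" "finite E2" "finite E3" using E1s E2s E3s finE finite_subset by blast+
  have card123: "card (E1 \<union> (E2 \<union> E3)) = card N + t + D"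
    using card_Un_disjoint[OF fin123(1) finite_UnI[OF fin123(2,3)] d12]
      card_Un_disjoint[OF fin123(2,3) d23] cE1 cE2 cE3 by simp
  have sub123: "E1 \<union> (E2 \<union> E3) \<subseteq> edges V E" using E1s E2s E3s by blast
  have xu0: "x u > 0" using xpos assms(5) by auto
  show False
  proof (cases "\<exists>y'\<in>W. E y y'")
    case True
    then obtain y' where y': "y' \<in> W" "E y y'" by blast
    have e4: "{y,y'} \<in> edges V E" using y' inV by (auto intro: in_edges)
    have e4n: "{y,y'} \<notin> E1 \<union> (E2 \<union> E3)"
    proof
      assume h: "{y,y'} \<in> E1 \<union> (E2 \<union> E3)"
      have "u \<notin> {y,y'}" using yW' y' uW by auto
      then have "{y,y'} \<in> E2 \<union> E3" using h uE1 by blast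
      moreover have "\<not> {y,y'} \<subseteq> N" using yW' NW by auto
      moreover have "{y,y'} \<inter> N = {}" using yW' y' NW by auto
      ultimately show False using E2N E3N by blast
    qed
    have "card (insert {y,y'} (E1 \<union> (E2 \<union> E3))) \<le> m"
      using cardm finE e4 sub123 by (metis card_mono insert_subset)
    then have mb: "card N + t + D + 1 \<le> m"
      using card123 e4n fin123 by simp
    have "real k * (x u - x y) \<ge> 0" using xle yW' NV by auto
    then have "r * r * x u \<le> (real m - 2) * x u + r * x u"
    proof -
      have "(real (card N) + real t - 1 + real D) * x u \<le> (real m - 2) * x u"
        using mb xu0 by (intro mult_right_mono) auto
      then show ?thesis using key \<open>real k * (x u - x y) \<ge> 0\<close> by linarith
    qed
    then have "(r * r) * x u \<le> (real m - 2 + r) * x u" by (simp add: algebra_simps)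
    then have "r * r \<le> real m - 2 + r" using xu0 by simp
    then show False using lb by (simp add: power2_eq_square)
  next
    case False
    define S where "S = {z\<in>N. E y z}"
    have yV: "y \<in> V" using yW' NV by auto
    have hyN: "{w\<in>V. E y w} = S"
    proof
      show "{w\<in>V. E y w} \<subseteq> S"
      proof
        fix w assume w: "w \<in> {w\<in>V. E y w}"
        have "w \<noteq> u" using w yW' sym unfolding W_def N_def by auto
        moreover have "w \<notin> W" using w False by auto
        ultimately show "w \<in> S" using w unfolding S_def W_def by auto
      qed
    qed (use NV in \<open>auto simp: S_def\<close>)
    have kS: "k = card S" unfolding k_def dN_def S_def using sym by metis
    have finS: "finite S" unfolding S_def using finN by auto
    have ry: "r * x y \<le> real k * x u"
    proof -
      have "r * x y = (\<Sum>z\<in>S. x z)" using eig[OF yV] hyN by simp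
      also have "\<dots> \<le> (\<Sum>z\<in>S. x u)" using xle NV unfolding S_def by (intro sum_mono) auto
      finally show ?thesis using kS by simp
    qed
    have k1: "k \<ge> 1"
    proof -
      obtain w where "w \<in> V" "E y w" using noiso yV unfolding no_isolated_def by blast
      then have "S \<noteq> {}" using hyN by auto
      then show ?thesis using kS finS by (simp add: Suc_le_eq card_gt_0_iff)
    qed
    have k3: "k \<le> 3"
    proof -
      have "card (S - {c,l}) \<le> Suc 0"
      proof (subst card_le_Suc0_iff_eq)
        show "finite (S - {c,l})" using finS by simp
        show "\<forall>a\<in>S - {c,l}. \<forall>b\<in>S - {c,l}. a = b"
        proof (intro ballI, rule ccontr)
          fix b d assume bd: "b \<in> S - {c,l}" "d \<in> S - {c,l}" "b \<noteq> d"
          have bN: "b \<in> N" "d \<in> N" "E y b" "E y d" using bd unfolding S_def by auto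
          have "distinct [u, b, y, d, c, l]"
            using bd bN uN yW' NW cN lN Ecl irr uW by auto
          moreover have "{u, b, y, d, c, l} \<subseteq> V" using assms(5) bN yV cN lN NV by auto
          moreover have "E u b \<and> E b y \<and> E y d \<and> E d u \<and> E u c \<and> E c l \<and> E l u"
            using bN cN lN Ecl sym unfolding N_def by auto
          ultimately show False using free unfolding H43_free_def by blast
        qed
      qed
      moreover have "card S \<le> card (S - {c,l}) + card {c,l}"
        using card_Un_le[of "S - {c,l}" "{c,l}"] card_mono[of "(S - {c,l}) \<union> {c,l}" S] finS
        by (metis Un_Diff_cancel2 card_mono finite.emptyI finite.insertI finite_UnI le_trans sup.cobounded1 finite_Diff)
      moreover have "card {c,l} \<le> 2" by (simp add: card_insert_le_m1)
      ultimately show ?thesis using kS by linarith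
    qed
    have mb: "card N + t + D \<le> m" using card123 sub123 finE cardm card_mono by metis
    define a where "a = x y / x u"
    have xya: "x y = a * x u" unfolding a_def using xu0 by simp
    have "(real (card N) + real t - 1 + real D) * x u \<le> (real m - 1) * x u"
      using mb xu0 by (intro mult_right_mono) auto
    then have "(r * r) * x u \<le> (real m - 1 + r - real k + real k * a) * x u"
      using key xya by (simp add: algebra_simps)
    then have F0: "r * r \<le> real m - 1 + r - real k + real k * a" using xu0 by simp
    have ra: "r * a \<le> real k" using ry xya xu0 by (simp add: mult.assoc[symmetric])
    have F1: "r * (r * r) \<le> real m * r - r + r * r - real k * r + real k * (r * a)"
    proof -
      have "r * (r * r) \<le> r * (real m - 1 + r - real k + real k * a)"
        using F0 lb by (intro mult_left_mono) auto
      then show ?thesis by (simp add: algebra_simps)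
    qed
    have F3: "r * (r * r) \<ge> r * r + real m * r - 7/4 * r"
    proof -
      have "r * (r * r) \<ge> r * (r + real m - 7/4)"
        using lb by (intro mult_left_mono) (auto simp: power2_eq_square)
      then show ?thesis by (simp add: algebra_simps)
    qed
    have F2: "real k * (r * a) \<le> real k * real k" using ra by (intro mult_left_mono) auto
    have "k = 1 \<or> k = 2 \<or> k = 3" using k1 k3 by auto
    then show False using F1 F2 F3 lb(2) by auto
  qed
qed

end
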